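(* Let $G$ be a finite abstract simplicial complex with connection matrix $L$ and $g=L^{-1}$. Then for every $x\in G$, $$V(x):=\sum_{y\in G}g(x,y)=\omega(x)\,g(x,x)=k(x),$$ where $k(x)=\omega(x)\big(1-\chi(S(x))\big)$.
   Context: A finite abstract simplicial complex $G$ is a finite set of non-empty finite sets closed under taking non-empty subsets; $\omega(x)=(-1)^{|x|-1}$. The connection matrix $L$ has $L(x,y)=1$ if $x\cap y\neq\emptyset$ and $0$ otherwise. The graph $G_1$ has vertex set $G$, with $x\neq y$ adjacent iff one contains the other. $S(x)=\{y\in G: y\subsetneq x\text{ or }x\subsetneq y\}$, and $\chi(S(x))$ is the Euler characteristic of the clique complex of the subgraph of $G_1$ induced on $S(x)$. *)

theory Defs
  imports Complex_Main
begin

definition simplicial_complex :: "'a set set \<Rightarrow> bool" where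
  "simplicial_complex G \<longleftrightarrow> finite G \<and>
     (\<forall>x\<in>G. finite x \<and> x \<noteq> {}) \<and>
     (\<forall>x\<in>G. \<forall>y. y \<subseteq> x \<and> y \<noteq> {} \<longrightarrow> y \<in> G)"

definition omega :: "'a set \<Rightarrow> real" where
  "omega x = (-1) ^ (card x - 1)"

definition connection :: "'a set \<Rightarrow> 'a set \<Rightarrow> real" where
  "connection x y = (if x \<inter> y \<noteq> {} then 1 else 0)"

definition G1_adj :: "'a set \<Rightarrow> 'a set \<Rightarrow> bool" where
  "G1_adj x y \<longleftrightarrow> x \<noteq> y \<and> (x \<subseteq> y \<or> y \<subseteq> x)"

definition unit_sphere :: "'a set set \<Rightarrow> 'a set \<Rightarrow> 'a set set" where
  "unit_sphere G x = {y \<in> G. y \<subset> x \<or> x \<subset> y}"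

definition clique_complex :: "'v set \<Rightarrow> ('v \<Rightarrow> 'v \<Rightarrow> bool) \<Rightarrow> 'v set set" where
  "clique_complex V E = {c. c \<subseteq> V \<and> c \<noteq> {} \<and> finite c \<and>
      (\<forall>a\<in>c. \<forall>b\<in>c. a \<noteq> b \<longrightarrow> E a b)}"

definition euler_char :: "'v set set \<Rightarrow> real" where
  "euler_char K = (\<Sum>c\<in>K. (-1) ^ (card c - 1))"

definition chi_S :: "'a set set \<Rightarrow> 'a set \<Rightarrow> real" where
  "chi_S G x = euler_char (clique_complex (unit_sphere G x) G1_adj)"

end

theory Submission
  imports Defs
begin

lemma pow_alt:
  assumes "finite t" "t \<noteq> {}"
  shows "(\<Sum>p\<in>Pow t. (-1::real)^card p) = 0"
proof -
  obtain a where a: "a \<in> t" using assms by auto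
  define r where "r = t - {a}"
  have t: "t = insert a r" and ar: "a \<notin> r" and fr: "finite r" using a assms by (auto simp: r_def)
  have inj: "inj_on (insert a) (Pow r)" using ar by (auto simp: inj_on_def)
  have disj: "Pow r \<inter> insert a ` Pow r = {}" using ar by auto
  have "(\<Sum>p\<in>Pow t. (-1::real)^card p) = (\<Sum>p\<in>Pow r. (-1::real)^card p) + (\<Sum>p\<in>insert a ` Pow r. (-1::real)^card p)"
    unfolding t Pow_insert using fr disj by (simp add: sum.union_disjoint)
  also have "(\<Sum>p\<in>insert a ` Pow r. (-1::real)^card p) = (\<Sum>p\<in>Pow r. (-1::real)^card (insert a p))"
    using inj by (simp add: sum.reindex)
  also have "\<dots> = (\<Sum>p\<in>Pow r. - ((-1::real)^card p))"
  proof (rule sum.cong)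
    fix p assume "p \<in> Pow r"
    then have "finite p" "a \<notin> p" using fr ar finite_subset by auto
    then show "(-1::real)^card (insert a p) = - ((-1::real)^card p)" by simp
  qed simp
  finally show ?thesis by (simp add: sum_negf)
qed

lemma interval_alt:
  assumes "finite z" "w \<subseteq> z"
  shows "(\<Sum>p\<in>{p. w \<subseteq> p \<and> p \<subseteq> z}. (-1::real)^card p) = (if w = z then (-1)^card w else 0)"
proof (cases "w = z")
  case True
  then have "{p. w \<subseteq> p \<and> p \<subseteq> z} = {z}" by auto
  then show ?thesis using True by simp
next
  case False
  have fw: "finite w" using assms finite_subset by auto
  have eq: "{p. w \<subseteq> p \<and> p \<subseteq> z} = (\<lambda>q. w \<union> q) ` Pow (z - w)" 
  proof
    show "{p. w \<subseteq> p \<and> p \<subseteq> z} \<subseteq> (\<lambda>q. w \<union> q) ` Pow (z - w)"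
    proof
      fix p assume "p \<in> {p. w \<subseteq> p \<and> p \<subseteq> z}"
      then have "p = w \<union> (p - w)" "p - w \<in> Pow (z - w)" by auto
      then show "p \<in> (\<lambda>q. w \<union> q) ` Pow (z - w)" by blast
    qed
  qed (use assms in auto)
  have inj: "inj_on (\<lambda>q. w \<union> q) (Pow (z - w))" by (auto simp: inj_on_def)
  have "(\<Sum>p\<in>{p. w \<subseteq> p \<and> p \<subseteq> z}. (-1::real)^card p) = (\<Sum>q\<in>Pow (z-w). (-1::real)^card (w \<union> q))"
    unfolding eq using inj by (simp add: sum.reindex)
  also have "\<dots> = (\<Sum>q\<in>Pow (z-w). (-1::real)^card w * (-1)^card q)"
  proof (rule sum.cong)
    fix q assume "q \<in> Pow (z - w)"
    then have "finite q" "w \<inter> q = {}" using assms by (auto intro: finite_subset)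
    then show "(-1::real)^card (w \<union> q) = (-1::real)^card w * (-1)^card q"
      using fw by (simp add: card_Un_disjoint power_add)
  qed simp
  also have "\<dots> = (-1::real)^card w * (\<Sum>q\<in>Pow (z-w). (-1)^card q)" by (simp add: sum_distrib_left)
  also have "\<dots> = 0" using pow_alt[of "z - w"] assms False by auto
  finally show ?thesis using False by simp
qed

lemma omega_s: "finite y \<Longrightarrow> y \<noteq> {} \<Longrightarrow> omega y = - ((-1::real)^card y)"
proof -
  assume "finite y" "y \<noteq> {}"
  then have "card y = Suc (card y - 1)" by (simp add: card_gt_0_iff)
  then have "(-1::real)^card y = - ((-1)^(card y - 1))" by (metis mult_minus1 power_Suc)
  then show ?thesis by (simp add: omega_def)
qed

lemma ne_sub:
  assumes "finite t"
  shows "(\<Sum>y\<in>{y. y \<subseteq> t \<and> y \<noteq> {}}. omega y) = (if t = {} then 0 else 1)"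
proof (cases "t = {}")
  case True
  then show ?thesis by simp
next
  case False
  have eq: "{y. y \<subseteq> t \<and> y \<noteq> {}} = Pow t - {{}}" by auto
  have "(\<Sum>y\<in>{y. y \<subseteq> t \<and> y \<noteq> {}}. omega y) = (\<Sum>y\<in>Pow t - {{}}. - ((-1::real)^card y))"
    unfolding eq by (rule sum.cong) (use assms finite_subset in \<open>auto intro: omega_s\<close>)
  also have "\<dots> = - ((\<Sum>y\<in>Pow t. (-1::real)^card y) - 1)"
    using assms by (simp add: sum_negf sum_diff1)
  also have "\<dots> = 1" using pow_alt[OF assms False] by simp
  finally show ?thesis using False by simp
qed


definition chs :: "'a set set \<Rightarrow> 'a set set set" where
  "chs P = {c. c \<subseteq> P \<and> (\<forall>a\<in>c. \<forall>b\<in>c. a \<subseteq> b \<or> b \<subseteq> a)}"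

definition FF :: "'a set set \<Rightarrow> real" where
  "FF P = (\<Sum>c\<in>chs P. (-1::real)^card c)"

lemma chs_finite: "finite P \<Longrightarrow> finite (chs P)"
  by (rule finite_subset[of _ "Pow P"]) (auto simp: chs_def)

lemma chs_elem_finite: "finite P \<Longrightarrow> c \<in> chs P \<Longrightarrow> finite c"
  by (auto simp: chs_def intro: finite_subset)

lemma euler_FF:
  assumes "finite P"
  shows "euler_char (clique_complex P G1_adj) = 1 - FF P"
proof -
  have eq: "clique_complex P G1_adj = chs P - {{}}"
    using assms by (auto simp: clique_complex_def chs_def G1_adj_def intro: finite_subset)
  have "euler_char (clique_complex P G1_adj) = (\<Sum>c\<in>chs P - {{}}. - ((-1::real)^card c))"
    unfolding euler_char_def eq
  proof (rule sum.cong)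
    fix c assume c: "c \<in> chs P - {{}}"
    then have "finite c" "c \<noteq> {}" using chs_elem_finite[OF assms] by auto
    then have "card c = Suc (card c - 1)" by (simp add: card_gt_0_iff)
    then show "(-1::real)^(card c - 1) = - ((-1)^card c)" by (metis mult_minus1 power_Suc minus_minus)
  qed simp
  also have "\<dots> = - (FF P - 1)"
    unfolding FF_def using chs_finite[OF assms] by (simp add: sum_negf sum_diff1 chs_def)
  finally show ?thesis by simp
qed

lemma FF_join:
  assumes fA: "finite A" and fB: "finite B" and dj: "A \<inter> B = {}" and le: "\<forall>a\<in>A. \<forall>b\<in>B. a \<subseteq> b"
  shows "FF (A \<union> B) = FF A * FF B"
proof -
  define U where "U = (\<lambda>p::'a set set \<times> 'a set set. fst p \<union> snd p)"
  have eq: "chs (A \<union> B) = U ` (chs A \<times> chs B)"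
  proof
    show "chs (A \<union> B) \<subseteq> U ` (chs A \<times> chs B)"
    proof
      fix c assume c: "c \<in> chs (A \<union> B)"
      have 1: "c = U (c \<inter> A, c \<inter> B)" using c unfolding U_def chs_def by auto
      have 2: "(c \<inter> A, c \<inter> B) \<in> chs A \<times> chs B" using c unfolding chs_def by auto
      from 1 2 show "c \<in> U ` (chs A \<times> chs B)" by (rule image_eqI)
    qed
  next
    show "U ` (chs A \<times> chs B) \<subseteq> chs (A \<union> B)"
    proof
      fix c assume "c \<in> U ` (chs A \<times> chs B)"
      then obtain c1 c2 where h: "c1 \<in> chs A" "c2 \<in> chs B" and c: "c = c1 \<union> c2"
        unfolding U_def by auto
      show "c \<in> chs (A \<union> B)" unfolding chs_def c
      proof (intro CollectI conjI ballI)
        show "c1 \<union> c2 \<subseteq> A \<union> B" using h by (auto simp: chs_def)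
        fix a b assume ab: "a \<in> c1 \<union> c2" "b \<in> c1 \<union> c2"
        have c1: "c1 \<subseteq> A" "\<forall>a\<in>c1. \<forall>b\<in>c1. a \<subseteq> b \<or> b \<subseteq> a" using h(1) by (auto simp: chs_def)
        have c2: "c2 \<subseteq> B" "\<forall>a\<in>c2. \<forall>b\<in>c2. a \<subseteq> b \<or> b \<subseteq> a" using h(2) by (auto simp: chs_def)
        show "a \<subseteq> b \<or> b \<subseteq> a"
        proof (cases "a \<in> c1")
          case True
          show ?thesis
          proof (cases "b \<in> c1")
            case True
            then show ?thesis using c1 \<open>a \<in> c1\<close> by blast
          next
            case False
            then have "b \<in> B" using ab c2 by blast
            moreover have "a \<in> A" using True c1 by blast
            ultimately show ?thesis using le by blast
          qed
        next
          case False
          then have aB: "a \<in> c2" using ab by blast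
          show ?thesis
          proof (cases "b \<in> c1")
            case True
            then have "b \<in> A" using c1 by blast
            moreover have "a \<in> B" using aB c2 by blast
            ultimately show ?thesis using le by blast
          next
            case False
            then show ?thesis using c2 aB ab by blast
          qed
        qed
      qed
    qed
  qed
  have inj: "inj_on U (chs A \<times> chs B)"
  proof (rule inj_onI)
    fix p q assume h: "p \<in> chs A \<times> chs B" "q \<in> chs A \<times> chs B" "U p = U q"
    have "fst p = U p \<inter> A" "fst q = U q \<inter> A" "snd p = U p \<inter> B" "snd q = U q \<inter> B"
      using h(1,2) dj unfolding U_def chs_def by auto
    then show "p = q" using h(3) by (simp add: prod_eq_iff)
  qed
  have "FF A * FF B = (\<Sum>c1\<in>chs A. \<Sum>c2\<in>chs B. (-1::real)^card c1 * (-1)^card c2)"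
    unfolding FF_def by (rule sum_product)
  also have "\<dots> = (\<Sum>p\<in>chs A \<times> chs B. (-1::real)^card (fst p) * (-1)^card (snd p))"
    by (simp add: sum.cartesian_product case_prod_unfold)
  also have "\<dots> = (\<Sum>p\<in>chs A \<times> chs B. (-1::real)^card (U p))"
  proof (rule sum.cong)
    fix p assume h: "p \<in> chs A \<times> chs B"
    have p1: "fst p \<in> chs A" and p2: "snd p \<in> chs B" using h by (auto simp: mem_Times_iff)
    have "finite (fst p)" by (rule chs_elem_finite[OF fA p1])
    moreover have "finite (snd p)" by (rule chs_elem_finite[OF fB p2])
    moreover have "fst p \<subseteq> A" "snd p \<subseteq> B" using p1 p2 unfolding chs_def by blast+
    then have "fst p \<inter> snd p = {}" using dj by blast
    ultimately have "finite (fst p)" "finite (snd p)" "fst p \<inter> snd p = {}" by auto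
    then show "(-1::real)^card (fst p) * (-1)^card (snd p) = (-1)^card (U p)"
      unfolding U_def by (simp add: card_Un_disjoint power_add)
  qed simp
  also have "\<dots> = FF (A \<union> B)"
    unfolding FF_def eq using inj by (simp add: sum.reindex)
  finally show ?thesis by simp
qed

lemma FF_minrec:
  assumes fP: "finite P"
  shows "FF P = 1 - (\<Sum>p\<in>P. FF {q\<in>P. p \<subset> q})"
proof -
  define A where "A p = insert p ` chs {q\<in>P. p \<subset> q}" for p
  have fch: "finite (chs {q\<in>P. p \<subset> q})" for p using fP by (auto intro: chs_finite)
  have eq: "chs P = insert {} (\<Union>p\<in>P. A p)"
  proof
    show "chs P \<subseteq> insert {} (\<Union>p\<in>P. A p)"
    proof
      fix c assume c: "c \<in> chs P"
      show "c \<in> insert {} (\<Union>p\<in>P. A p)"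
      proof (cases "c = {}")
        case False
        have fc: "finite c" by (rule chs_elem_finite[OF fP c])
        obtain m where m: "m \<in> c" "\<forall>b\<in>c. b \<le> m \<longrightarrow> m = b"
          using finite_has_minimal[OF fc False] by blast
        have cP: "c \<subseteq> P" and cc: "\<forall>a\<in>c. \<forall>b\<in>c. a \<subseteq> b \<or> b \<subseteq> a" using c by (auto simp: chs_def)
        have lt: "\<forall>q\<in>c - {m}. m \<subset> q"
        proof
          fix q assume q: "q \<in> c - {m}"
          then have "q \<subseteq> m \<or> m \<subseteq> q" using cc m by blast
          then show "m \<subset> q" using m(2) q by blast
        qed
        have "c - {m} \<in> chs {q\<in>P. m \<subset> q}" using cP cc lt unfolding chs_def by blast
        moreover have "c = insert m (c - {m})" using m by blast
        ultimately have "c \<in> A m" unfolding A_def by blast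
        then show ?thesis using m cP by blast
      qed simp
    qed
  next
    show "insert {} (\<Union>p\<in>P. A p) \<subseteq> chs P"
    proof
      fix c assume c: "c \<in> insert {} (\<Union>p\<in>P. A p)"
      show "c \<in> chs P"
      proof (cases "c = {}")
        case True then show ?thesis by (simp add: chs_def)
      next
        case False
        then obtain p d where p: "p \<in> P" and d: "d \<in> chs {q\<in>P. p \<subset> q}" and cd: "c = insert p d"
          using c unfolding A_def by blast
        have "d \<subseteq> P" "\<forall>q\<in>d. p \<subset> q" "\<forall>a\<in>d. \<forall>b\<in>d. a \<subseteq> b \<or> b \<subseteq> a" using d by (auto simp: chs_def)
        then show ?thesis unfolding cd chs_def using p by blast
      qed
    qed
  qed
  have ne: "{} \<notin> (\<Union>p\<in>P. A p)" unfolding A_def by blast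
  have disj: "\<forall>p\<in>P. \<forall>p'\<in>P. p \<noteq> p' \<longrightarrow> A p \<inter> A p' = {}"
  proof (intro ballI impI)
    fix p p' assume pp: "p \<in> P" "p' \<in> P" "p \<noteq> p'"
    show "A p \<inter> A p' = {}"
    proof (rule ccontr)
      assume "A p \<inter> A p' \<noteq> {}"
      then obtain d d' where d: "d \<in> chs {q\<in>P. p \<subset> q}" and d': "d' \<in> chs {q\<in>P. p' \<subset> q}"
        and e: "insert p d = insert p' d'" unfolding A_def by blast
      have "\<forall>q\<in>d. p \<subset> q" "\<forall>q\<in>d'. p' \<subset> q" using d d' by (auto simp: chs_def)
      moreover have "p' \<in> d" "p \<in> d'" using e pp(3) by blast+
      ultimately show False by blast
    qed
  qed
  have fU: "finite (\<Union>p\<in>P. A p)" using fP fch unfolding A_def by blast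
  have "FF P = 1 + (\<Sum>c\<in>(\<Union>p\<in>P. A p). (-1::real)^card c)"
    unfolding FF_def eq using fU ne by simp
  also have "(\<Sum>c\<in>(\<Union>p\<in>P. A p). (-1::real)^card c) = (\<Sum>p\<in>P. \<Sum>c\<in>A p. (-1::real)^card c)"
    by (rule sum.UNION_disjoint) (use fP fch disj in \<open>auto simp: A_def\<close>)
  also have "\<dots> = (\<Sum>p\<in>P. - FF {q\<in>P. p \<subset> q})"
  proof (rule sum.cong)
    fix p assume p: "p \<in> P"
    have inj: "inj_on (insert p) (chs {q\<in>P. p \<subset> q})"
    proof (rule inj_onI)
      fix d d' assume d: "d \<in> chs {q\<in>P. p \<subset> q}" and d': "d' \<in> chs {q\<in>P. p \<subset> q}" and e: "insert p d = insert p d'"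
      have "p \<notin> d" "p \<notin> d'" using d d' by (auto simp: chs_def)
      then show "d = d'" using e by (metis insert_ident)
    qed
    have "(\<Sum>c\<in>A p. (-1::real)^card c) = (\<Sum>d\<in>chs {q\<in>P. p \<subset> q}. (-1::real)^card (insert p d))"
      unfolding A_def using inj by (simp add: sum.reindex)
    also have "\<dots> = (\<Sum>d\<in>chs {q\<in>P. p \<subset> q}. - ((-1::real)^card d))"
    proof (rule sum.cong)
      fix d assume d: "d \<in> chs {q\<in>P. p \<subset> q}"
      have "finite d" using d fP by (auto simp: chs_def intro: finite_subset)
      moreover have "p \<notin> d" using d by (auto simp: chs_def)
      ultimately show "(-1::real)^card (insert p d) = - ((-1::real)^card d)" by simp
    qed simp
    finally show "(\<Sum>c\<in>A p. (-1::real)^card c) = - FF {q\<in>P. p \<subset> q}"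
      by (simp add: FF_def sum_negf)
  qed simp
  finally show ?thesis by (simp add: sum_negf)
qed

lemma FF_maxrec:
  assumes fP: "finite P"
  shows "FF P = 1 - (\<Sum>p\<in>P. FF {q\<in>P. q \<subset> p})"
proof -
  define A where "A p = insert p ` chs {q\<in>P. q \<subset> p}" for p
  have fch: "finite (chs {q\<in>P. q \<subset> p})" for p using fP by (auto intro: chs_finite)
  have eq: "chs P = insert {} (\<Union>p\<in>P. A p)"
  proof
    show "chs P \<subseteq> insert {} (\<Union>p\<in>P. A p)"
    proof
      fix c assume c: "c \<in> chs P"
      show "c \<in> insert {} (\<Union>p\<in>P. A p)"
      proof (cases "c = {}")
        case False
        have fc: "finite c" by (rule chs_elem_finite[OF fP c])
        obtain m where m: "m \<in> c" "\<forall>b\<in>c. m \<le> b \<longrightarrow> m = b"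
          using finite_has_maximal[OF fc False] by blast
        have cP: "c \<subseteq> P" and cc: "\<forall>a\<in>c. \<forall>b\<in>c. a \<subseteq> b \<or> b \<subseteq> a" using c by (auto simp: chs_def)
        have lt: "\<forall>q\<in>c - {m}. q \<subset> m"
        proof
          fix q assume q: "q \<in> c - {m}"
          then have "q \<subseteq> m \<or> m \<subseteq> q" using cc m by blast
          then show "q \<subset> m" using m(2) q by blast
        qed
        have "c - {m} \<in> chs {q\<in>P. q \<subset> m}" using cP cc lt unfolding chs_def by blast
        moreover have "c = insert m (c - {m})" using m by blast
        ultimately have "c \<in> A m" unfolding A_def by blast
        then show ?thesis using m cP by blast
      qed simp
    qed
  next
    show "insert {} (\<Union>p\<in>P. A p) \<subseteq> chs P"
    proof
      fix c assume c: "c \<in> insert {} (\<Union>p\<in>P. A p)"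
      show "c \<in> chs P"
      proof (cases "c = {}")
        case True then show ?thesis by (simp add: chs_def)
      next
        case False
        then obtain p d where p: "p \<in> P" and d: "d \<in> chs {q\<in>P. q \<subset> p}" and cd: "c = insert p d"
          using c unfolding A_def by blast
        have "d \<subseteq> P" "\<forall>q\<in>d. q \<subset> p" "\<forall>a\<in>d. \<forall>b\<in>d. a \<subseteq> b \<or> b \<subseteq> a" using d by (auto simp: chs_def)
        then show ?thesis unfolding cd chs_def using p by blast
      qed
    qed
  qed
  have ne: "{} \<notin> (\<Union>p\<in>P. A p)" unfolding A_def by blast
  have disj: "\<forall>p\<in>P. \<forall>p'\<in>P. p \<noteq> p' \<longrightarrow> A p \<inter> A p' = {}"
  proof (intro ballI impI)
    fix p p' assume pp: "p \<in> P" "p' \<in> P" "p \<noteq> p'"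
    show "A p \<inter> A p' = {}"
    proof (rule ccontr)
      assume "A p \<inter> A p' \<noteq> {}"
      then obtain d d' where d: "d \<in> chs {q\<in>P. q \<subset> p}" and d': "d' \<in> chs {q\<in>P. q \<subset> p'}"
        and e: "insert p d = insert p' d'" unfolding A_def by blast
      have "\<forall>q\<in>d. q \<subset> p" "\<forall>q\<in>d'. q \<subset> p'" using d d' by (auto simp: chs_def)
      moreover have "p' \<in> d" "p \<in> d'" using e pp(3) by blast+
      ultimately show False by blast
    qed
  qed
  have fU: "finite (\<Union>p\<in>P. A p)" using fP fch unfolding A_def by blast
  have "FF P = 1 + (\<Sum>c\<in>(\<Union>p\<in>P. A p). (-1::real)^card c)"
    unfolding FF_def eq using fU ne by simp
  also have "(\<Sum>c\<in>(\<Union>p\<in>P. A p). (-1::real)^card c) = (\<Sum>p\<in>P. \<Sum>c\<in>A p. (-1::real)^card c)"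
    by (rule sum.UNION_disjoint) (use fP fch disj in \<open>auto simp: A_def\<close>)
  also have "\<dots> = (\<Sum>p\<in>P. - FF {q\<in>P. q \<subset> p})"
  proof (rule sum.cong)
    fix p assume p: "p \<in> P"
    have inj: "inj_on (insert p) (chs {q\<in>P. q \<subset> p})"
    proof (rule inj_onI)
      fix d d' assume d: "d \<in> chs {q\<in>P. q \<subset> p}" and d': "d' \<in> chs {q\<in>P. q \<subset> p}" and e: "insert p d = insert p d'"
      have "p \<notin> d" "p \<notin> d'" using d d' by (auto simp: chs_def)
      then show "d = d'" using e by (metis insert_ident)
    qed
    have "(\<Sum>c\<in>A p. (-1::real)^card c) = (\<Sum>d\<in>chs {q\<in>P. q \<subset> p}. (-1::real)^card (insert p d))"
      unfolding A_def using inj by (simp add: sum.reindex)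
    also have "\<dots> = (\<Sum>d\<in>chs {q\<in>P. q \<subset> p}. - ((-1::real)^card d))"
    proof (rule sum.cong)
      fix d assume d: "d \<in> chs {q\<in>P. q \<subset> p}"
      have "finite d" using d fP by (auto simp: chs_def intro: finite_subset)
      moreover have "p \<notin> d" using d by (auto simp: chs_def)
      ultimately show "(-1::real)^card (insert p d) = - ((-1::real)^card d)" by simp
    qed simp
    finally show "(\<Sum>c\<in>A p. (-1::real)^card c) = - FF {q\<in>P. q \<subset> p}"
      by (simp add: FF_def sum_negf)
  qed simp
  finally show ?thesis by (simp add: sum_negf)
qed

lemma FF_B:
  "finite x \<Longrightarrow> x \<noteq> {} \<Longrightarrow> FF {y. y \<noteq> {} \<and> y \<subset> x} = omega x"
proof (induction "card x" arbitrary: x rule: less_induct)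
  case less
  have fB: "finite {y. y \<noteq> {} \<and> y \<subset> x}"
    by (rule finite_subset[of _ "Pow x"]) (use less.prems in auto)
  have "FF {y. y \<noteq> {} \<and> y \<subset> x} = 1 - (\<Sum>p\<in>{y. y \<noteq> {} \<and> y \<subset> x}. FF {q\<in>{y. y \<noteq> {} \<and> y \<subset> x}. q \<subset> p})"
    by (rule FF_maxrec[OF fB])
  also have "(\<Sum>p\<in>{y. y \<noteq> {} \<and> y \<subset> x}. FF {q\<in>{y. y \<noteq> {} \<and> y \<subset> x}. q \<subset> p}) = (\<Sum>p\<in>{y. y \<noteq> {} \<and> y \<subset> x}. omega p)"
  proof (rule sum.cong)
    fix p assume p: "p \<in> {y. y \<noteq> {} \<and> y \<subset> x}"
    have "{q\<in>{y. y \<noteq> {} \<and> y \<subset> x}. q \<subset> p} = {y. y \<noteq> {} \<and> y \<subset> p}" using p by auto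
    moreover have "finite p" using p less.prems by (auto intro: finite_subset)
    moreover have "card p < card x" using p less.prems by (auto intro: psubset_card_mono)
    ultimately show "FF {q\<in>{y. y \<noteq> {} \<and> y \<subset> x}. q \<subset> p} = omega p" using less.hyps p by auto
  qed simp
  also have "\<dots> = (\<Sum>p\<in>{y. y \<subseteq> x \<and> y \<noteq> {}} - {x}. omega p)"
    by (rule sum.cong) auto
  also have "\<dots> = 1 - omega x"
    using ne_sub[OF less.prems(1)] less.prems by (simp add: sum_diff1)
  finally show ?case by simp
qed

lemma FF_U:
  assumes sc: "simplicial_complex G"
  shows "w \<in> G \<Longrightarrow> FF {z\<in>G. w \<subset> z} = (-1::real)^card w * (\<Sum>z\<in>{z\<in>G. w \<subseteq> z}. (-1::real)^card z)"
proof (induction "card {z\<in>G. w \<subset> z}" arbitrary: w rule: less_induct)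
  case less
  have fG: "finite G" and fin: "\<forall>x\<in>G. finite x \<and> x \<noteq> {}"
    and cl: "\<forall>x\<in>G. \<forall>y. y \<subseteq> x \<and> y \<noteq> {} \<longrightarrow> y \<in> G"
    using sc unfolding simplicial_complex_def by blast+
  let ?U = "{z\<in>G. w \<subset> z}"
  have fU: "finite ?U" using fG by auto
  have "FF ?U = 1 - (\<Sum>p\<in>?U. FF {q\<in>?U. p \<subset> q})" by (rule FF_minrec[OF fU])
  also have "(\<Sum>p\<in>?U. FF {q\<in>?U. p \<subset> q}) = (\<Sum>p\<in>?U. \<Sum>z\<in>{z\<in>?U. p \<subseteq> z}. (-1::real)^card p * (-1::real)^card z)"
  proof (rule sum.cong)
    fix p assume p: "p \<in> ?U"
    have e1: "{q\<in>?U. p \<subset> q} = {z\<in>G. p \<subset> z}" using p by auto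
    have "card {z\<in>G. p \<subset> z} < card ?U"
      by (rule psubset_card_mono[OF fU]) (use p in auto)
    then have "FF {z\<in>G. p \<subset> z} = (-1::real)^card p * (\<Sum>z\<in>{z\<in>G. p \<subseteq> z}. (-1::real)^card z)"
      using less.hyps p by auto
    moreover have "{z\<in>G. p \<subseteq> z} = {z\<in>?U. p \<subseteq> z}" using p by auto
    ultimately show "FF {q\<in>?U. p \<subset> q} = (\<Sum>z\<in>{z\<in>?U. p \<subseteq> z}. (-1::real)^card p * (-1::real)^card z)"
      unfolding e1 by (simp add: sum_distrib_left)
  qed simp
  also have "\<dots> = (\<Sum>z\<in>?U. \<Sum>p\<in>{p\<in>?U. p \<subseteq> z}. (-1::real)^card p * (-1::real)^card z)"
    by (rule sum.swap_restrict[OF fU fU])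
  also have "\<dots> = (\<Sum>z\<in>?U. - ((-1::real)^card w * (-1::real)^card z))"
  proof (rule sum.cong)
    fix z assume z: "z \<in> ?U"
    have fz: "finite z" using z fin by auto
    have e: "{p\<in>?U. p \<subseteq> z} = {p. w \<subseteq> p \<and> p \<subseteq> z} - {w}"
    proof
      show "{p\<in>?U. p \<subseteq> z} \<subseteq> {p. w \<subseteq> p \<and> p \<subseteq> z} - {w}" by auto
      show "{p. w \<subseteq> p \<and> p \<subseteq> z} - {w} \<subseteq> {p\<in>?U. p \<subseteq> z}"
      proof
        fix p assume p: "p \<in> {p. w \<subseteq> p \<and> p \<subseteq> z} - {w}"
        have "w \<noteq> {}" using less.prems fin by auto
        then have "p \<noteq> {}" using p by auto
        then have "p \<in> G" using cl z p by blast
        then show "p \<in> {p\<in>?U. p \<subseteq> z}" using p by auto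
      qed
    qed
    have fI: "finite {p. w \<subseteq> p \<and> p \<subseteq> z}" by (rule finite_subset[of _ "Pow z"]) (use fz in auto)
    have "(\<Sum>p\<in>{p\<in>?U. p \<subseteq> z}. (-1::real)^card p) = 0 - (-1::real)^card w"
    proof -
      have wz: "w \<subseteq> z" "w \<noteq> z" using z by auto
      have i0: "(\<Sum>p\<in>{p. w \<subseteq> p \<and> p \<subseteq> z}. (-1::real)^card p) = 0"
        using interval_alt[OF fz wz(1)] wz(2) by simp
      have wi: "w \<in> {p. w \<subseteq> p \<and> p \<subseteq> z}" using wz by simp
      show ?thesis unfolding e sum_diff1[OF fI] using wi i0 by simp
    qed
    then show "(\<Sum>p\<in>{p\<in>?U. p \<subseteq> z}. (-1::real)^card p * (-1::real)^card z) = - ((-1::real)^card w * (-1::real)^card z)"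
      by (simp add: sum_distrib_right[symmetric])
  qed simp
  finally have "FF ?U = 1 + (-1::real)^card w * (\<Sum>z\<in>?U. (-1::real)^card z)"
    by (simp add: sum_negf sum_distrib_left)
  moreover have "{z\<in>G. w \<subseteq> z} = insert w ?U" using less.prems by auto
  moreover have "(-1::real)^card w * (-1::real)^card w = 1" by (simp add: power_mult_distrib[symmetric])
  ultimately show ?case using fU by (simp add: distrib_left mult.assoc[symmetric])
qed

lemma sc_facts:
  assumes "simplicial_complex G"
  shows "finite G" "\<forall>x\<in>G. finite x \<and> x \<noteq> {}" "\<forall>x\<in>G. \<forall>y. y \<subseteq> x \<and> y \<noteq> {} \<longrightarrow> y \<in> G"
  using assms unfolding simplicial_complex_def by blast+

lemma ws_sq: "finite x \<Longrightarrow> x \<noteq> {} \<Longrightarrow> omega x * omega x = 1"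
  using omega_s[of x] by (simp add: power_mult_distrib[symmetric])

definition hh :: "'a set set \<Rightarrow> 'a set \<Rightarrow> real" where
  "hh G t = (\<Sum>z\<in>{z\<in>G. t \<subseteq> z}. omega z)"

definition g0 :: "'a set set \<Rightarrow> 'a set \<Rightarrow> 'a set \<Rightarrow> real" where
  "g0 G a b = omega a * omega b * hh G (a \<union> b)"

lemma inter_sum:
  assumes fz: "finite z" and nz: "z \<noteq> {}"
  shows "(\<Sum>y\<in>{y. y \<subseteq> z \<and> y \<noteq> {}}. connection a y * omega y) = (if z \<subseteq> a then 1 else 0)"
proof -
  have fS: "finite {y. y \<subseteq> z \<and> y \<noteq> {}}" by (rule finite_subset[of _ "Pow z"]) (use fz in auto)
  have "(\<Sum>y\<in>{y. y \<subseteq> z \<and> y \<noteq> {}}. connection a y * omega y)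
      = (\<Sum>y\<in>{y. y \<subseteq> z \<and> y \<noteq> {}}. omega y - (if a \<inter> y = {} then omega y else 0))"
    by (rule sum.cong) (auto simp: connection_def)
  also have "\<dots> = (\<Sum>y\<in>{y. y \<subseteq> z \<and> y \<noteq> {}}. omega y) - (\<Sum>y\<in>{y. y \<subseteq> z \<and> y \<noteq> {}}. (if a \<inter> y = {} then omega y else 0))"
    by (simp add: sum_subtractf)
  also have "(\<Sum>y\<in>{y. y \<subseteq> z \<and> y \<noteq> {}}. (if a \<inter> y = {} then omega y else 0)) = (\<Sum>y\<in>{y\<in>{y. y \<subseteq> z \<and> y \<noteq> {}}. a \<inter> y = {}}. omega y)"
    by (rule sum.inter_filter[OF fS, symmetric])
  also have "{y\<in>{y. y \<subseteq> z \<and> y \<noteq> {}}. a \<inter> y = {}} = {y. y \<subseteq> z - a \<and> y \<noteq> {}}" by auto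
  also have "(\<Sum>y\<in>{y. y \<subseteq> z - a \<and> y \<noteq> {}}. omega y) = (if z - a = {} then 0 else 1)"
    using ne_sub[of "z - a"] fz by simp
  finally show ?thesis using ne_sub[OF fz] nz by auto
qed

lemma Lg0:
  assumes sc: "simplicial_complex G" and a: "a \<in> G" and b: "b \<in> G"
  shows "(\<Sum>y\<in>G. connection a y * g0 G y b) = (if a = b then 1 else 0)"
proof -
  note fG = sc_facts(1)[OF sc] and fin = sc_facts(2)[OF sc] and cl = sc_facts(3)[OF sc]
  have "(\<Sum>y\<in>G. connection a y * g0 G y b)
      = (\<Sum>y\<in>G. omega b * (\<Sum>z\<in>{z\<in>G. y \<union> b \<subseteq> z}. connection a y * omega y * omega z))"
    by (rule sum.cong) (simp_all add: g0_def hh_def sum_distrib_left mult_ac)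
  also have "\<dots> = omega b * (\<Sum>y\<in>G. \<Sum>z\<in>{z\<in>G. y \<union> b \<subseteq> z}. connection a y * omega y * omega z)"
    by (simp add: sum_distrib_left)
  also have "(\<Sum>y\<in>G. \<Sum>z\<in>{z\<in>G. y \<union> b \<subseteq> z}. connection a y * omega y * omega z)
      = (\<Sum>z\<in>G. \<Sum>y\<in>{y\<in>G. y \<union> b \<subseteq> z}. connection a y * omega y * omega z)"
    by (rule sum.swap_restrict[OF fG fG])
  also have "\<dots> = (\<Sum>z\<in>G. if b \<subseteq> z \<and> z \<subseteq> a then omega z else 0)"
  proof (rule sum.cong)
    fix z assume z: "z \<in> G"
    show "(\<Sum>y\<in>{y\<in>G. y \<union> b \<subseteq> z}. connection a y * omega y * omega z) = (if b \<subseteq> z \<and> z \<subseteq> a then omega z else 0)"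
    proof (cases "b \<subseteq> z")
      case True
      have e: "{y\<in>G. y \<union> b \<subseteq> z} = {y. y \<subseteq> z \<and> y \<noteq> {}}"
      proof
        show "{y\<in>G. y \<union> b \<subseteq> z} \<subseteq> {y. y \<subseteq> z \<and> y \<noteq> {}}" using fin by blast
        show "{y. y \<subseteq> z \<and> y \<noteq> {}} \<subseteq> {y\<in>G. y \<union> b \<subseteq> z}"
        proof
          fix y assume y: "y \<in> {y. y \<subseteq> z \<and> y \<noteq> {}}"
          then have "y \<in> G" using cl z by blast
          then show "y \<in> {y\<in>G. y \<union> b \<subseteq> z}" using y True by blast
        qed
      qed
      have "(\<Sum>y\<in>{y\<in>G. y \<union> b \<subseteq> z}. connection a y * omega y * omega z)
          = (\<Sum>y\<in>{y. y \<subseteq> z \<and> y \<noteq> {}}. connection a y * omega y) * omega z"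
        unfolding e by (simp add: sum_distrib_right)
      also have "\<dots> = (if z \<subseteq> a then 1 else 0) * omega z" using inter_sum[of z a] z fin by simp
      finally show ?thesis using True by simp
    next
      case False
      then have "{y\<in>G. y \<union> b \<subseteq> z} = {}" by auto
      then show ?thesis using False by simp
    qed
  qed simp
  also have "\<dots> = (\<Sum>z\<in>{z\<in>G. b \<subseteq> z \<and> z \<subseteq> a}. omega z)"
    by (rule sum.inter_filter[OF fG, symmetric])
  finally have main: "(\<Sum>y\<in>G. connection a y * g0 G y b) = omega b * (\<Sum>z\<in>{z\<in>G. b \<subseteq> z \<and> z \<subseteq> a}. omega z)" .
  show ?thesis
  proof (cases "b \<subseteq> a")
    case True
    have fa: "finite a" and nb: "b \<noteq> {}" and fb: "finite b" using a b fin by auto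
    have e: "{z\<in>G. b \<subseteq> z \<and> z \<subseteq> a} = {z. b \<subseteq> z \<and> z \<subseteq> a}"
    proof
      show "{z\<in>G. b \<subseteq> z \<and> z \<subseteq> a} \<subseteq> {z. b \<subseteq> z \<and> z \<subseteq> a}" by blast
      show "{z. b \<subseteq> z \<and> z \<subseteq> a} \<subseteq> {z\<in>G. b \<subseteq> z \<and> z \<subseteq> a}"
      proof
        fix z assume z: "z \<in> {z. b \<subseteq> z \<and> z \<subseteq> a}"
        then have "z \<noteq> {}" using nb by blast
        then have "z \<in> G" using cl a z by blast
        then show "z \<in> {z\<in>G. b \<subseteq> z \<and> z \<subseteq> a}" using z by blast
      qed
    qed
    have "(\<Sum>z\<in>{z. b \<subseteq> z \<and> z \<subseteq> a}. omega z) = (\<Sum>z\<in>{z. b \<subseteq> z \<and> z \<subseteq> a}. - ((-1::real)^card z))"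
    proof (rule sum.cong)
      fix z assume z: "z \<in> {z. b \<subseteq> z \<and> z \<subseteq> a}"
      then have "finite z" using fa by (blast intro: finite_subset)
      moreover have "z \<noteq> {}" using z nb by blast
      ultimately show "omega z = - ((-1::real)^card z)" by (rule omega_s)
    qed simp
    also have "\<dots> = - (if b = a then (-1)^card b else 0)"
      using interval_alt[OF fa True] by (simp add: sum_negf)
    finally have "(\<Sum>z\<in>{z\<in>G. b \<subseteq> z \<and> z \<subseteq> a}. omega z) = - (if b = a then (-1)^card b else 0)"
      unfolding e .
    then show ?thesis unfolding main using omega_s[OF fb nb] by (auto simp: power_mult_distrib[symmetric])
  next
    case False
    then have E: "{z\<in>G. b \<subseteq> z \<and> z \<subseteq> a} = {}" by blast
    have "a \<noteq> b" using False by blast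
    then show ?thesis unfolding main E by simp
  qed
qed

lemma g_eq:
  assumes sc: "simplicial_complex G"
    and inv: "\<forall>x\<in>G. \<forall>z\<in>G. (\<Sum>y\<in>G. g x y * connection y z) = (if x = z then 1 else 0)"
    and x: "x \<in> G" and b: "b \<in> G"
  shows "g x b = g0 G x b"
proof -
  note fG = sc_facts(1)[OF sc]
  have "(\<Sum>y\<in>G. g x y * (if y = b then 1 else 0)) = (\<Sum>y\<in>G. if y = b then g x y else 0)"
    by (rule sum.cong) auto
  then have "g x b = (\<Sum>y\<in>G. g x y * (if y = b then 1 else 0))" using b fG by (simp add: sum.delta')
  also have "\<dots> = (\<Sum>y\<in>G. g x y * (\<Sum>a\<in>G. connection y a * g0 G a b))"
    by (rule sum.cong) (simp_all add: Lg0[OF sc _ b])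
  also have "\<dots> = (\<Sum>y\<in>G. \<Sum>a\<in>G. g x y * connection y a * g0 G a b)"
    by (simp add: sum_distrib_left mult.assoc)
  also have "\<dots> = (\<Sum>a\<in>G. \<Sum>y\<in>G. g x y * connection y a * g0 G a b)"
    by (rule sum.swap)
  also have "\<dots> = (\<Sum>a\<in>G. (\<Sum>y\<in>G. g x y * connection y a) * g0 G a b)"
    by (simp add: sum_distrib_right)
  also have "\<dots> = (\<Sum>a\<in>G. (if x = a then 1 else 0) * g0 G a b)"
    by (rule sum.cong) (simp_all add: inv x)
  also have "\<dots> = (\<Sum>a\<in>G. if x = a then g0 G a b else 0)"
    by (rule sum.cong) auto
  also have "\<dots> = g0 G x b" using x fG by (simp add: sum.delta)
  finally show ?thesis .
qed

theorem mainTheorem14: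
  fixes G :: "'a set set" and g :: "'a set \<Rightarrow> 'a set \<Rightarrow> real"
  assumes "simplicial_complex G"
    and "\<forall>x\<in>G. \<forall>z\<in>G. (\<Sum>y\<in>G. connection x y * g y z) = (if x = z then 1 else 0)"
    and "\<forall>x\<in>G. \<forall>z\<in>G. (\<Sum>y\<in>G. g x y * connection y z) = (if x = z then 1 else 0)"
    and "x \<in> G"
  shows "(\<Sum>y\<in>G. g x y) = omega x * g x x \<and>
         omega x * g x x = omega x * (1 - chi_S G x)"
proof -
  note sc = assms(1) and x = assms(4)
  note fG = sc_facts(1)[OF sc] and fin = sc_facts(2)[OF sc] and cl = sc_facts(3)[OF sc]
  have fx: "finite x" and nx: "x \<noteq> {}" using x fin by auto
  have gxx: "g x x = hh G x"
    using g_eq[OF sc assms(3) x x] ws_sq[OF fx nx] by (simp add: g0_def)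
  have "(\<Sum>y\<in>G. g x y) = (\<Sum>y\<in>G. g0 G x y)"
    by (rule sum.cong) (simp_all add: g_eq[OF sc assms(3) x])
  also have "\<dots> = (\<Sum>y\<in>G. omega x * (\<Sum>z\<in>{z\<in>G. x \<union> y \<subseteq> z}. omega y * omega z))"
    by (rule sum.cong) (simp_all add: g0_def hh_def sum_distrib_left mult_ac)
  also have "\<dots> = omega x * (\<Sum>y\<in>G. \<Sum>z\<in>{z\<in>G. x \<union> y \<subseteq> z}. omega y * omega z)"
    by (simp add: sum_distrib_left)
  also have "(\<Sum>y\<in>G. \<Sum>z\<in>{z\<in>G. x \<union> y \<subseteq> z}. omega y * omega z)
      = (\<Sum>z\<in>G. \<Sum>y\<in>{y\<in>G. x \<union> y \<subseteq> z}. omega y * omega z)"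
    by (rule sum.swap_restrict[OF fG fG])
  also have "\<dots> = (\<Sum>z\<in>G. if x \<subseteq> z then omega z else 0)"
  proof (rule sum.cong)
    fix z assume z: "z \<in> G"
    show "(\<Sum>y\<in>{y\<in>G. x \<union> y \<subseteq> z}. omega y * omega z) = (if x \<subseteq> z then omega z else 0)"
    proof (cases "x \<subseteq> z")
      case True
      have e: "{y\<in>G. x \<union> y \<subseteq> z} = {y. y \<subseteq> z \<and> y \<noteq> {}}"
      proof
        show "{y\<in>G. x \<union> y \<subseteq> z} \<subseteq> {y. y \<subseteq> z \<and> y \<noteq> {}}" using fin by blast
        show "{y. y \<subseteq> z \<and> y \<noteq> {}} \<subseteq> {y\<in>G. x \<union> y \<subseteq> z}"
        proof
          fix y assume y: "y \<in> {y. y \<subseteq> z \<and> y \<noteq> {}}"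
          then have "y \<in> G" using cl z by blast
          then show "y \<in> {y\<in>G. x \<union> y \<subseteq> z}" using y True by blast
        qed
      qed
      have "(\<Sum>y\<in>{y\<in>G. x \<union> y \<subseteq> z}. omega y * omega z) = (\<Sum>y\<in>{y. y \<subseteq> z \<and> y \<noteq> {}}. omega y) * omega z"
        unfolding e by (simp add: sum_distrib_right)
      then show ?thesis using ne_sub[of z] z fin True by simp
    next
      case False
      then have "{y\<in>G. x \<union> y \<subseteq> z} = {}" by auto
      then show ?thesis using False by simp
    qed
  qed simp
  also have "\<dots> = hh G x" unfolding hh_def by (rule sum.inter_filter[OF fG, symmetric])
  finally have part1: "(\<Sum>y\<in>G. g x y) = omega x * g x x" using gxx by simp
  define B where "B = {y. y \<noteq> {} \<and> y \<subset> x}"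
  define U where "U = {z\<in>G. x \<subset> z}"
  have us: "unit_sphere G x = B \<union> U"
  proof
    show "unit_sphere G x \<subseteq> B \<union> U" unfolding unit_sphere_def B_def U_def using fin by blast
    show "B \<union> U \<subseteq> unit_sphere G x"
    proof
      fix y assume y: "y \<in> B \<union> U"
      show "y \<in> unit_sphere G x"
      proof (cases "y \<in> B")
        case True
        then have "y \<subseteq> x" "y \<noteq> {}" "y \<subset> x" unfolding B_def by blast+
        then have "y \<in> G" using cl x by blast
        then show ?thesis using \<open>y \<subset> x\<close> unfolding unit_sphere_def by blast
      next
        case False
        then show ?thesis using y unfolding unit_sphere_def U_def by blast
      qed
    qed
  qed
  have fB: "finite B" unfolding B_def by (rule finite_subset[of _ "Pow x"]) (use fx in auto)
  have fU: "finite U" unfolding U_def using fG by auto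
  have "FF (unit_sphere G x) = FF B * FF U"
    unfolding us by (rule FF_join[OF fB fU]) (auto simp: B_def U_def)
  also have "\<dots> = omega x * ((-1::real)^card x * (\<Sum>z\<in>{z\<in>G. x \<subseteq> z}. (-1::real)^card z))"
    unfolding B_def U_def using FF_B[OF fx nx] FF_U[OF sc x] by simp
  also have "\<dots> = - (\<Sum>z\<in>{z\<in>G. x \<subseteq> z}. (-1::real)^card z)"
    using omega_s[OF fx nx] by (simp add: power_mult_distrib[symmetric])
  also have "\<dots> = hh G x" unfolding hh_def sum_negf[symmetric]
  proof (rule sum.cong)
    fix z assume "z \<in> {z\<in>G. x \<subseteq> z}"
    then have "finite z" "z \<noteq> {}" using fin by blast+
    then show "- ((-1::real)^card z) = omega z" using omega_s[of z] by simp
  qed simp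
  finally have "FF (unit_sphere G x) = hh G x" .
  moreover have fS: "finite (unit_sphere G x)" using fG unfolding unit_sphere_def by simp
  moreover have "chi_S G x = 1 - FF (unit_sphere G x)" unfolding chi_S_def by (rule euler_FF[OF fS])
  ultimately have h: "g x x = 1 - chi_S G x" using gxx by simp
  show ?thesis
  proof (rule conjI)
    show "(\<Sum>y\<in>G. g x y) = omega x * g x x" by (rule part1)
    show "omega x * g x x = omega x * (1 - chi_S G x)" by (subst h) (rule refl)
  qed
qed

end
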